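(* Let $R$ be a $*$-ring. Then the following are equivalent: (1) $R$ is strongly $J$-$*$-clean. (2) $R$ is strongly $J$-clean and strongly $*$-clean. (3) $R$ is abelian and $R$ is $J$-$*$-clean.
   Context: All rings are associative with identity. A $*$-ring is a ring $R$ with an involution $*$, i.e. a map $a\mapsto a^*$ with $(a+b)^*=a^*+b^*$, $(ab)^*=b^*a^*$, $(a^* )^*=a$. $U(R)$ denotes the group of units and $J(R)$ the Jacobson radical of $R$. A projection is an element $e$ with $e^2=e=e^*$. $R$ is strongly $J$-$*$-clean if every $a\in R$ can be written $a=e+u$ with $e$ a projection, $u\in J(R)$ and $ae=ea$. $R$ is strongly $J$-clean if every $a\in R$ can be written $a=e+u$ with $e$ an idempotent, $u\in J(R)$ and $ae=ea$. $R$ is strongly $*$-clean if every $a\in R$ can be written $a=e+u$ with $e$ a projection, $u\in U(R)$ and $eu=ue$. $R$ is $J$-$*$-clean if every element of $R$ is the sum of a projection and an element of $J(R)$ (no commutation required). A ring is abelian if all its idempotents are central. *)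

theory Defs
  imports Main
begin

definition is_involution :: "('a::ring_1 \<Rightarrow> 'a) \<Rightarrow> bool" where
  "is_involution st \<longleftrightarrow>
     (\<forall>a b. st (a + b) = st a + st b) \<and>
     (\<forall>a b. st (a * b) = st b * st a) \<and>
     (\<forall>a. st (st a) = a)"

definition units_of_ring :: "'a::ring_1 set" where
  "units_of_ring = {u. \<exists>v. u * v = 1 \<and> v * u = 1}"

definition left_ideal :: "'a::ring_1 set \<Rightarrow> bool" where
  "left_ideal I \<longleftrightarrow> 0 \<in> I \<and> (\<forall>x\<in>I. \<forall>y\<in>I. x + y \<in> I) \<and>
     (\<forall>x\<in>I. - x \<in> I) \<and> (\<forall>r. \<forall>x\<in>I. r * x \<in> I)"

definition maximal_left_ideal :: "'a::ring_1 set \<Rightarrow> bool" where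
  "maximal_left_ideal M \<longleftrightarrow> left_ideal M \<and> M \<noteq> UNIV \<and>
     (\<forall>I. left_ideal I \<and> M \<subseteq> I \<longrightarrow> I = M \<or> I = UNIV)"

definition jacobson :: "'a::ring_1 set" where
  "jacobson = \<Inter> {M. maximal_left_ideal M}"

definition idempotent :: "'a::ring_1 \<Rightarrow> bool" where
  "idempotent e \<longleftrightarrow> e * e = e"

definition projection :: "('a::ring_1 \<Rightarrow> 'a) \<Rightarrow> 'a \<Rightarrow> bool" where
  "projection st e \<longleftrightarrow> e * e = e \<and> st e = e"

definition strongly_J_star_clean :: "('a::ring_1 \<Rightarrow> 'a) \<Rightarrow> bool" where
  "strongly_J_star_clean st \<longleftrightarrow>
     (\<forall>a. \<exists>e u. a = e + u \<and> projection st e \<and> u \<in> jacobson \<and> a * e = e * a)"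

definition strongly_J_clean :: "'a::ring_1 itself \<Rightarrow> bool" where
  "strongly_J_clean _ \<longleftrightarrow>
     (\<forall>a::'a. \<exists>e u. a = e + u \<and> idempotent e \<and> u \<in> jacobson \<and> a * e = e * a)"

definition strongly_star_clean :: "('a::ring_1 \<Rightarrow> 'a) \<Rightarrow> bool" where
  "strongly_star_clean st \<longleftrightarrow>
     (\<forall>a. \<exists>e u. a = e + u \<and> projection st e \<and> u \<in> units_of_ring \<and> e * u = u * e)"

definition J_star_clean :: "('a::ring_1 \<Rightarrow> 'a) \<Rightarrow> bool" where
  "J_star_clean st \<longleftrightarrow> (\<forall>a. \<exists>e u. a = e + u \<and> projection st e \<and> u \<in> jacobson)"

definition abelian_ring :: "'a::ring_1 itself \<Rightarrow> bool" where
  "abelian_ring _ \<longleftrightarrow> (\<forall>e::'a. idempotent e \<longrightarrow> (\<forall>x. e * x = x * e))"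

end

theory Submission
  imports Defs
begin

lemma exists_maximal:
  fixes L :: "'a::ring_1 set"
  assumes L: "left_ideal L" and n1: "1 \<notin> L"
  shows "\<exists>M. maximal_left_ideal M \<and> L \<subseteq> M"
proof -
  define A where "A = {I::'a set. left_ideal I \<and> L \<subseteq> I \<and> 1 \<notin> I}"
  have "\<forall>C\<in>chains A. \<exists>U\<in>A. \<forall>X\<in>C. X \<subseteq> U"
  proof
    fix C assume C: "C \<in> chains A"
    show "\<exists>U\<in>A. \<forall>X\<in>C. X \<subseteq> U"
    proof (cases "C = {}")
      case True then show ?thesis using L n1 by (auto simp: A_def)
    next
      case False
      have sub: "C \<subseteq> A" and ch: "\<forall>X\<in>C. \<forall>Y\<in>C. X \<subseteq> Y \<or> Y \<subseteq> X"
        using C by (auto simp: chains_def chain_subset_def)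
      have li: "left_ideal (\<Union>C)"
        unfolding left_ideal_def
      proof (intro conjI ballI allI)
        show "0 \<in> \<Union>C" using False sub by (auto simp: A_def left_ideal_def)
      next
        fix x y assume "x \<in> \<Union>C" "y \<in> \<Union>C"
        then obtain X Y where "X \<in> C" "Y \<in> C" "x \<in> X" "y \<in> Y" by auto
        with ch have "x \<in> X \<and> y \<in> X \<and> X \<in> C \<or> x \<in> Y \<and> y \<in> Y \<and> Y \<in> C" by blast
        then show "x + y \<in> \<Union>C" using sub unfolding A_def left_ideal_def by blast
      next
        fix x assume "x \<in> \<Union>C"
        then show "- x \<in> \<Union>C" using sub unfolding A_def left_ideal_def by blast
      next
        fix r x assume "x \<in> \<Union>C"
        then show "r * x \<in> \<Union>C" using sub unfolding A_def left_ideal_def by blast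
      qed
      have "\<Union>C \<in> A" using li False sub by (auto simp: A_def)
      then show ?thesis by blast
    qed
  qed
  from Zorn_Lemma2[OF this] obtain M where M: "M \<in> A" and mx: "\<forall>X\<in>A. M \<subseteq> X \<longrightarrow> X = M" by blast
  have "maximal_left_ideal M"
    unfolding maximal_left_ideal_def
  proof (intro conjI allI impI)
    show "left_ideal M" using M by (simp add: A_def)
    show "M \<noteq> UNIV" using M by (auto simp: A_def)
  next
    fix I assume I: "left_ideal I \<and> M \<subseteq> I"
    show "I = M \<or> I = UNIV"
    proof (cases "1 \<in> I")
      case True
      have "\<forall>r. r \<in> I" using True I by (metis left_ideal_def mult.right_neutral)
      then show ?thesis by auto
    next
      case False
      then have "I \<in> A" using I M by (auto simp: A_def)
      then show ?thesis using mx I by blast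
    qed
  qed
  then show ?thesis using M by (auto simp: A_def)
qed

lemma J_mult: "x \<in> jacobson \<Longrightarrow> r * x \<in> (jacobson::'a::ring_1 set)"
  by (auto simp: jacobson_def maximal_left_ideal_def left_ideal_def)

lemma J_neg: "x \<in> jacobson \<Longrightarrow> - x \<in> (jacobson::'a::ring_1 set)"
  by (auto simp: jacobson_def maximal_left_ideal_def left_ideal_def)

lemma J_left_inv:
  fixes u :: "'a::ring_1"
  assumes u: "u \<in> jacobson"
  shows "\<exists>v. v * (1 - u) = 1"
proof (rule ccontr)
  assume nex: "\<not> ?thesis"
  define L where "L = {r * (1 - u) | r. True}"
  have "left_ideal L" unfolding left_ideal_def L_def
  proof (intro conjI ballI allI)
    show "0 \<in> {r * (1 - u) |r. True}" by (metis (mono_tags, lifting) mem_Collect_eq mult_zero_left)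
  next
    fix x y assume "x \<in> {r * (1 - u) |r. True}" "y \<in> {r * (1 - u) |r. True}"
    then obtain r s where "x = r * (1 - u)" "y = s * (1 - u)" by blast
    then have "x + y = (r + s) * (1 - u)" by (simp only: distrib_right)
    then show "x + y \<in> {r * (1 - u) |r. True}" by blast
  next
    fix x assume "x \<in> {r * (1 - u) |r. True}"
    then obtain r where "x = r * (1 - u)" by blast
    then have "- x = (- r) * (1 - u)" by (simp only: minus_mult_left)
    then show "- x \<in> {r * (1 - u) |r. True}" by blast
  next
    fix t x assume "x \<in> {r * (1 - u) |r. True}"
    then obtain r where "x = r * (1 - u)" by blast
    then have "t * x = (t * r) * (1 - u)" by (simp only: mult.assoc)
    then show "t * x \<in> {r * (1 - u) |r. True}" by blast
  qed
  moreover have "1 \<notin> L" using nex by (auto simp: L_def)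
  ultimately obtain M where M: "maximal_left_ideal M" "L \<subseteq> M" using exists_maximal by blast
  have li: "left_ideal M" and ne: "M \<noteq> UNIV" using M(1) unfolding maximal_left_ideal_def by blast+
  have "u \<in> M" using u M(1) unfolding jacobson_def by blast
  moreover have "1 * (1 - u) \<in> L" unfolding L_def by blast
  then have "1 - u \<in> M" using M(2) by auto
  ultimately have "(1 - u) + u \<in> M" using li unfolding left_ideal_def by blast
  then have "1 \<in> M" by simp
  then have "\<forall>r. r * 1 \<in> M" using li unfolding left_ideal_def by blast
  then have "\<forall>r. r \<in> M" by simp
  then show False using ne by auto
qed

lemma J_unit:
  fixes u :: "'a::ring_1"
  assumes u: "u \<in> jacobson"
  shows "1 - u \<in> units_of_ring"
proof -
  obtain v where v: "v * (1 - u) = 1" using J_left_inv[OF u] by blast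
  have "v = 1 - (- (v * u))" using v by (simp add: algebra_simps)
  moreover have "- (v * u) \<in> jacobson" using J_neg J_mult u by blast
  ultimately obtain w where w: "w * v = 1" using J_left_inv by metis
  have "w = w * v * (1 - u)" using v by (simp add: mult.assoc)
  then have "w = 1 - u" using w by simp
  then show ?thesis using v w by (auto simp: units_of_ring_def)
qed

lemma unit_plus_J:
  fixes x j :: "'a::ring_1"
  assumes x: "x * y = 1" "y * x = 1" and j: "j \<in> jacobson"
  shows "x + j \<in> units_of_ring"
proof -
  have "- (y * j) \<in> jacobson" using J_neg J_mult j by blast
  then have "1 + y*j \<in> units_of_ring" using J_unit by fastforce
  then obtain w where w: "(1 + y*j) * w = 1" "w * (1 + y*j) = 1"
    unfolding units_of_ring_def by blast
  have "x * (1 + y*j) = x + x * y * j" by (simp add: distrib_left mult.assoc)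
  then have e: "x + j = x * (1 + y*j)" using x by simp
  have "(x * (1 + y*j)) * (w * y) = x * ((1 + y*j) * w) * y" by (simp only: mult.assoc)
  then have "(x + j) * (w * y) = 1" unfolding e using w x by simp
  moreover have "(w * y) * (x * (1 + y*j)) = w * (y * x) * (1 + y*j)" by (simp only: mult.assoc)
  then have "(w * y) * (x + j) = 1" unfolding e using w x by simp
  ultimately show ?thesis by (auto simp: units_of_ring_def)
qed

lemma cube:
  fixes g e :: "'a::ring_1"
  assumes "g * g = g" "e * e = e" "g * e = e * g"
  shows "(g - e) * (g - e) * (g - e) = g - e"
proof -
  have "(g - e) * (g - e) = g + e - (g * e + g * e)" using assms by (simp add: algebra_simps)
  then have "(g - e) * (g - e) * (g - e) = (g + e - (g * e + g * e)) * (g - e)" by simp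
  also have "\<dots> = g - e" using assms
    by (simp add: algebra_simps mult.assoc flip: mult.assoc[of g e e]) (metis mult.assoc)
  finally show ?thesis .
qed

lemma idem_J_eq:
  fixes g e :: "'a::ring_1"
  assumes "g * g = g" "e * e = e" "g * e = e * g" and J: "g - e \<in> jacobson"
  shows "g = e"
proof -
  define u where "u = g - e"
  have c: "u * u * u = u" using cube[OF assms(1-3)] by (simp add: u_def)
  have "u * u \<in> jacobson" using J_mult J u_def by blast
  then obtain v where v: "v * (1 - u * u) = 1" using J_left_inv by blast
  have "(1 - u * u) * u = 0" using c by (simp add: algebra_simps mult.assoc)
  then have "v * ((1 - u*u) * u) = 0" by simp
  then have "u = 0" using v by (simp add: mult.assoc[symmetric])
  then show ?thesis by (simp add: u_def)
qed

lemma inv_basic: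
  assumes "is_involution st"
  shows "st 0 = 0" "st 1 = 1" "st (- x) = - st x" "st (x - y) = st x - st y"
        "st (a * b) = st b * st a" "st (a + b) = st a + st b" "st (st a) = a"
proof -
  have add: "\<And>a b. st (a + b) = st a + st b" and mul: "\<And>a b. st (a * b) = st b * st a"
    and inv: "\<And>a. st (st a) = a" using assms by (auto simp: is_involution_def)
  show z: "st 0 = 0" using add[of 0 0] by simp
  show "st 1 = 1" using mul[of "st 1" 1] inv by simp
  have n: "st (- z) = - st z" for z
  proof -
    have "st z + st (- z) = 0" using add[of z "-z"] z by simp
    then show ?thesis by (metis neg_eq_iff_add_eq_0)
  qed
  show "st (- x) = - st x" by (rule n)
  show "st (x - y) = st x - st y" using add[of x "-y"] n[of y] by simp
  show "st (a * b) = st b * st a" "st (a + b) = st a + st b" "st (st a) = a" by (fact mul add inv)+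
qed

lemma proj_compl:
  assumes "is_involution st" "projection st e"
  shows "projection st (1 - e)"
proof -
  have e: "e * e = e" "st e = e" using assms(2) by (auto simp: projection_def)
  have "st (1 - e) = 1 - e" using inv_basic(2,4)[OF assms(1)] e by simp
  moreover have "(1 - e) * (1 - e) = 1 - e" using e by (simp add: algebra_simps)
  ultimately show ?thesis by (simp add: projection_def)
qed

lemma idem_aux:
  fixes e y :: "'a::ring_1"
  assumes "e * e = e" "e * y = y" "y * e = 0" "y * y = 0"
  shows "(e + y) * (e + y) = e + y"
  using assms by (simp add: distrib_left distrib_right)

lemma idem_aux2:
  fixes e y :: "'a::ring_1"
  assumes "e * e = e" "y * e = y" "e * y = 0" "y * y = 0"
  shows "(e + y) * (e + y) = e + y"
  using assms by (simp add: distrib_left distrib_right)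

lemma central_if_all_proj:
  fixes st :: "'a::ring_1 \<Rightarrow> 'a"
  fixes e x :: 'a
  assumes inv: "is_involution st" and P: "\<And>g. g * g = g \<Longrightarrow> st g = g"
    and e: "e * e = e"
  shows "e * x = x * e"
proof -
  note I = inv_basic[OF inv]
  have ee: "st e = e" using P e .
  have A1: "(1 - e) * e = 0" using e by (simp add: left_diff_distrib)
  have A2: "e * (1 - e) = 0" using e by (simp add: right_diff_distrib)
  define y where "y = e * x * (1 - e)"
  have "e * y = y" unfolding y_def using e by (metis mult.assoc)
  moreover have "y * e = 0" unfolding y_def using A1 by (simp add: mult.assoc)
  moreover have "y * y = 0" unfolding y_def using A1
    by (metis mult.assoc mult_zero_left mult_zero_right)
  ultimately have "(e + y) * (e + y) = e + y" using idem_aux e by blast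
  then have "st (e + y) = e + y" by (rule P)
  moreover have "st (e + y) = e + (1 - e) * st x * e"
    unfolding y_def using I ee by (simp add: mult.assoc)
  ultimately have h1: "(1 - e) * st x * e = y" by simp
  have "e * ((1 - e) * st x * e) = 0" using A2 by (simp add: mult.assoc[symmetric])
  then have y0: "y = 0" using h1 \<open>e * y = y\<close> by simp
  have "y = e * x - e * x * e" unfolding y_def by (simp add: right_diff_distrib)
  then have "e * x - e * x * e = 0" using y0 by simp
  then have r1: "e * x = e * x * e" by (rule right_minus_eq[THEN iffD1])
  define z where "z = (1 - e) * x * e"
  have "z * e = z" unfolding z_def using e by (metis mult.assoc)
  moreover have "e * z = 0" unfolding z_def using A2 by (simp add: mult.assoc[symmetric])
  moreover have "z * z = 0" unfolding z_def using A2
    by (metis mult.assoc mult_zero_left mult_zero_right)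
  ultimately have "(e + z) * (e + z) = e + z" using idem_aux2 e by blast
  then have "st (e + z) = e + z" by (rule P)
  moreover have "st (e + z) = e + e * st x * (1 - e)"
    unfolding z_def using I ee by (simp add: mult.assoc)
  ultimately have h2: "e * st x * (1 - e) = z" by simp
  have "(e * st x * (1 - e)) * e = 0" using A1 by (simp add: mult.assoc)
  then have z0: "z = 0" using h2 \<open>z * e = z\<close> by simp
  have "z = x * e - e * x * e" unfolding z_def by (simp add: left_diff_distrib)
  then have "x * e - e * x * e = 0" using z0 by simp
  then have r2: "x * e = e * x * e" by (rule right_minus_eq[THEN iffD1])
  show ?thesis using trans[OF r1 sym[OF r2]] .
qed

lemma sjsc_all_proj:
  fixes st :: "'a::ring_1 \<Rightarrow> 'a"
  assumes "strongly_J_star_clean st" "g * g = g"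
  shows "st g = g"
proof -
  obtain e u where h: "g = e + u" "projection st e" "u \<in> jacobson" "g * e = e * g"
    using assms(1) unfolding strongly_J_star_clean_def by blast
  have ee: "e * e = e" "st e = e" using h(2) unfolding projection_def by blast+
  have "g - e = u" using h(1) by simp
  then have "g = e" using idem_J_eq[OF assms(2) ee(1) h(4)] h(3) by blast
  then show ?thesis using ee by simp
qed

lemma ssc_all_proj:
  fixes st :: "'a::ring_1 \<Rightarrow> 'a"
  assumes inv: "is_involution st" and "strongly_star_clean st" "g * g = g"
  shows "st g = g"
proof -
  obtain p u where h: "g = p + u" "projection st p" "u \<in> units_of_ring" "p * u = u * p"
    using assms(2) unfolding strongly_star_clean_def by blast
  have pp: "p * p = p" "st p = p" using h(2) by (auto simp: projection_def)
  have "g * p = p * p + u * p" by (simp add: h(1) distrib_right)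
  moreover have "p * g = p * p + p * u" by (simp add: h(1) distrib_left)
  ultimately have gp: "g * p = p * g" by (simp add: h(4))
  have ud: "u = g - p" using h by simp
  have c: "u * u * u = u" using cube[OF assms(3) pp(1) gp] ud by simp
  obtain w where w: "w * u = 1" using h(3) by (auto simp: units_of_ring_def)
  have "w * (u * u * u) = w * u" using c by simp
  then have uu: "u * u = 1" using w by (simp add: mult.assoc[symmetric])
  have "(g - p) * (g - p) = g + p - (g * p + g * p)" using assms(3) pp gp by (simp add: algebra_simps)
  then have q: "g + p - (g * p + g * p) = 1" using uu ud by simp
  then have "g * (g + p - (g * p + g * p)) = g" by simp
  moreover have "g * (g * p) = g * p" by (metis assms(3) mult.assoc)
  moreover have "g * (g + p - (g * p + g * p)) = g * g + g * p - (g * (g * p) + g * (g * p))"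
    by (simp add: distrib_left right_diff_distrib)
  ultimately have "g - g * p = g" using assms(3) by simp
  then have "g * p = 0" by simp
  then have "g = 1 - p" using q by (simp add: algebra_simps)
  then show ?thesis using proj_compl[OF inv h(2)] by (simp add: projection_def)
qed

theorem proposition2p1:
  fixes st :: "'a::ring_1 \<Rightarrow> 'a"
  assumes "is_involution st"
  shows "(strongly_J_star_clean st \<longleftrightarrow>
            strongly_J_clean TYPE('a) \<and> strongly_star_clean st) \<and>
         (strongly_J_star_clean st \<longleftrightarrow>
            abelian_ring TYPE('a) \<and> J_star_clean st)"
proof -
  note inv = assms
  have 12: "strongly_J_clean TYPE('a) \<and> strongly_star_clean st" if S: "strongly_J_star_clean st"
  proof
    show "strongly_J_clean TYPE('a)" using S
      unfolding strongly_J_star_clean_def strongly_J_clean_def projection_def idempotent_def by blast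
    show "strongly_star_clean st" unfolding strongly_star_clean_def
    proof
      fix a :: 'a
      obtain e u where h: "a = e + u" "projection st e" "u \<in> jacobson" "a * e = e * a"
        using S unfolding strongly_J_star_clean_def by blast
      have ee: "e * e = e" using h(2) by (simp add: projection_def)
      have eu: "e * u = u * e" using h ee by (simp add: algebra_simps)
      define x where "x = e + e - 1"
      have xx: "x * x = 1" using ee by (simp add: x_def algebra_simps)
      have un: "x + u \<in> units_of_ring" using unit_plus_J[OF xx xx h(3)] .
      have "a = (1 - e) + (x + u)" using h by (simp add: x_def algebra_simps)
      moreover have "(1 - e) * (x + u) = (x + u) * (1 - e)" using eu ee
        by (simp add: x_def algebra_simps)
      ultimately show "\<exists>e u. a = e + u \<and> projection st e \<and> u \<in> units_of_ring \<and> e * u = u * e"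
        using un proj_compl[OF inv h(2)] by blast
    qed
  qed
  have 21: "strongly_J_star_clean st" if S: "strongly_J_clean TYPE('a)" "strongly_star_clean st"
    unfolding strongly_J_star_clean_def
  proof
    fix a :: 'a
    obtain e u where h: "a = e + u" "idempotent e" "u \<in> jacobson" "a * e = e * a"
      using S(1) unfolding strongly_J_clean_def by blast
    have "projection st e" using ssc_all_proj[OF inv S(2)] h(2)
      by (simp add: projection_def idempotent_def)
    then show "\<exists>e u. a = e + u \<and> projection st e \<and> u \<in> jacobson \<and> a * e = e * a"
      using h by blast
  qed
  have 13: "abelian_ring TYPE('a) \<and> J_star_clean st" if S: "strongly_J_star_clean st"
  proof
    show "abelian_ring TYPE('a)" unfolding abelian_ring_def idempotent_def
      using central_if_all_proj[OF inv sjsc_all_proj[OF S]] by blast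
    show "J_star_clean st" using S
      unfolding strongly_J_star_clean_def J_star_clean_def by blast
  qed
  have 31: "strongly_J_star_clean st" if S: "abelian_ring TYPE('a)" "J_star_clean st"
    unfolding strongly_J_star_clean_def
  proof
    fix a :: 'a
    obtain e u where h: "a = e + u" "projection st e" "u \<in> jacobson"
      using S(2) unfolding J_star_clean_def by blast
    have "a * e = e * a" using S(1) h(2)
      unfolding abelian_ring_def idempotent_def projection_def by metis
    then show "\<exists>e u. a = e + u \<and> projection st e \<and> u \<in> jacobson \<and> a * e = e * a"
      using h by blast
  qed
  show ?thesis using 12 21 13 31 by blast
qed

end
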